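(* Let $n\ge1$, fix $i\in\{1,\dots,n\}$, and let $f,h\in L^2((0,1)^n)$ be real-valued, both not a.e. constant, and set $g=f+h$. If $\mathrm{Cov}(f,h)=(fh)_0-f_0h_0\ge0$, then $$S^g_{T_{x_i}}\le\frac{\Big(\sqrt{S^f_{T_{x_i}}\mathrm{Var}(f)}+\sqrt{S^h_{T_{x_i}}\mathrm{Var}(h)}\Big)^2}{\mathrm{Var}(f)+\mathrm{Var}(h)},$$ and consequently $S^g_{T_{x_i}}\le 2\max\{S^f_{T_{x_i}},S^h_{T_{x_i}}\}$, where the factor $2$ is sharp.
   Context: All integrals are with respect to Lebesgue measure on $(0,1)^n$ (inputs independent, uniform on $[0,1]$). For $\varphi$, $\varphi_0=\int\varphi$ and $\mathrm{Var}(\varphi)=\int\varphi^2-\varphi_0^2$. With $x_{\sim i}=(x_1,\dots,x_{i-1},x_{i+1},\dots,x_n)$, the total Sobol index of $x_i$ for $\varphi$ is $$S^\varphi_{T_{x_i}}=\frac{\int\varphi^2\,dx-\int\big(\int\varphi\,dx_i\big)^2dx_{\sim i}}{\mathrm{Var}(\varphi)}.$$ *)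

theory Defs
  imports "HOL-Probability.Probability"
begin

definition unit_iv :: "real measure" where
  "unit_iv = restrict_space lborel {0<..<1}"

definition cube :: "nat \<Rightarrow> (nat \<Rightarrow> real) measure" where
  "cube n = PiM {1..n} (\<lambda>_. unit_iv)"

definition cube_wo :: "nat \<Rightarrow> nat \<Rightarrow> (nat \<Rightarrow> real) measure" where
  "cube_wo n i = PiM ({1..n} - {i}) (\<lambda>_. unit_iv)"

definition mean0 :: "nat \<Rightarrow> ((nat \<Rightarrow> real) \<Rightarrow> real) \<Rightarrow> real" where
  "mean0 n \<phi> = (\<integral>x. \<phi> x \<partial>cube n)"

definition Var :: "nat \<Rightarrow> ((nat \<Rightarrow> real) \<Rightarrow> real) \<Rightarrow> real" where
  "Var n \<phi> = (\<integral>x. (\<phi> x)\<^sup>2 \<partial>cube n) - (mean0 n \<phi>)\<^sup>2"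

definition Cov :: "nat \<Rightarrow> ((nat \<Rightarrow> real) \<Rightarrow> real) \<Rightarrow> ((nat \<Rightarrow> real) \<Rightarrow> real) \<Rightarrow> real" where
  "Cov n f h = (\<integral>x. f x * h x \<partial>cube n) - mean0 n f * mean0 n h"

definition sobol_total :: "nat \<Rightarrow> nat \<Rightarrow> ((nat \<Rightarrow> real) \<Rightarrow> real) \<Rightarrow> real" where
  "sobol_total n i \<phi> =
     ((\<integral>x. (\<phi> x)\<^sup>2 \<partial>cube n)
      - (\<integral>y. (\<integral>t. \<phi> (y(i := t)) \<partial>unit_iv)\<^sup>2 \<partial>cube_wo n i)) / Var n \<phi>"

definition admissible :: "nat \<Rightarrow> ((nat \<Rightarrow> real) \<Rightarrow> real) \<Rightarrow> bool" where
  "admissible n \<phi> \<longleftrightarrow> \<phi> \<in> borel_measurable (cube n)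
     \<and> integrable (cube n) (\<lambda>x. (\<phi> x)\<^sup>2)
     \<and> \<not> (\<exists>c. AE x in cube n. \<phi> x = c)"

end

theory Submission
  imports Defs
begin


lemma unit_iv_space: "space unit_iv = {0<..<1}"
  by (simp add: unit_iv_def)

lemma prob_unit_iv: "prob_space unit_iv"
proof (rule prob_spaceI)
  show "emeasure unit_iv (space unit_iv) = 1"
    by (simp add: unit_iv_def emeasure_restrict_space)
qed

lemma unit_iv_integral: "(\<integral>t. f t \<partial>unit_iv) = (LBINT t=ereal 0..ereal 1. f t)"
  by (simp add: unit_iv_def integral_restrict_space interval_integral_Ioo set_lebesgue_integral_def)

lemma unit_iv_t: "(\<integral>t. t \<partial>unit_iv) = 1/2"
proof -
  have "(LBINT t=ereal 0..ereal 1. t) = (\<lambda>t::real. t^2/2) 1 - (\<lambda>t. t^2/2) 0"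
    by (rule interval_integral_FTC_finite[where F="\<lambda>t::real. t^2/2"])
       (auto intro!: continuous_intros derivative_eq_intros simp: has_real_derivative_iff_has_vector_derivative[symmetric])
  then show ?thesis by (simp add: unit_iv_integral)
qed

lemma unit_iv_t2: "(\<integral>t. t^2 \<partial>unit_iv) = 1/3"
proof -
  have "(LBINT t=ereal 0..ereal 1. t^2) = (\<lambda>t::real. t^3/3) 1 - (\<lambda>t. t^3/3) 0"
    by (rule interval_integral_FTC_finite[where F="\<lambda>t::real. t^3/3"])
       (auto intro!: continuous_intros derivative_eq_intros simp: has_real_derivative_iff_has_vector_derivative[symmetric])
  then show ?thesis by (simp add: unit_iv_integral)
qed

lemma unit_iv_bounded_integrable:
  fixes f :: "real \<Rightarrow> real" and B :: real
  assumes "f \<in> borel_measurable borel" "\<And>t. 0 < t \<Longrightarrow> t < 1 \<Longrightarrow> \<bar>f t\<bar> \<le> B"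
  shows "integrable unit_iv f"
proof -
  interpret prob_space unit_iv by (rule prob_unit_iv)
  show ?thesis
    by (rule integrable_const_bound[where B=B])
       (use assms in \<open>auto simp: unit_iv_space unit_iv_def intro!: measurable_restrict_space1\<close>)
qed



lemma (in product_sigma_finite) distr_add_dim:
  assumes fin: "finite I" and iI: "i \<notin> I"
  shows "distr (Pi\<^sub>M I M \<Otimes>\<^sub>M M i) (Pi\<^sub>M (insert i I) M) (\<lambda>(f, y). f(i := y)) = Pi\<^sub>M (insert i I) M"
proof (rule PiM_eqI)
  interpret I: finite_product_sigma_finite M I by standard fact
  interpret P: pair_sigma_finite "Pi\<^sub>M I M" "M i" ..
  interpret Mi: sigma_finite_measure "M i" by (rule sigma_finite_measures)
  fix A assume A: "\<And>j. j \<in> insert i I \<Longrightarrow> A j \<in> sets (M j)"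
  have *: "((\<lambda>(f, y). f(i := y)) -` Pi\<^sub>E (insert i I) A \<inter> space (Pi\<^sub>M I M \<Otimes>\<^sub>M M i)) = Pi\<^sub>E I A \<times> A i"
    using A[THEN sets.sets_into_space] iI
    by (auto simp: space_PiM space_pair_measure PiE_def Pi_def extensional_def split: if_splits) 
  from A fin iI show "emeasure (distr (Pi\<^sub>M I M \<Otimes>\<^sub>M M i) (Pi\<^sub>M (insert i I) M) (\<lambda>(f, y). f(i := y))) (Pi\<^sub>E (insert i I) A) =
      (\<Prod>j\<in>insert i I. emeasure (M j) (A j))"
  proof (subst emeasure_distr)
    have "Pi\<^sub>E I A \<in> sets (Pi\<^sub>M I M)" using A by (auto intro!: sets_PiM_I_finite fin)
    then show "emeasure (Pi\<^sub>M I M \<Otimes>\<^sub>M M i) ((\<lambda>(f, y). f(i := y)) -` Pi\<^sub>E (insert i I) A \<inter> space (Pi\<^sub>M I M \<Otimes>\<^sub>M M i)) = (\<Prod>j\<in>insert i I. emeasure (M j) (A j))"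
      unfolding * using A fin iI sigma_finite_measure.emeasure_pair_measure_Times[OF sigma_finite_measures[of i], of "Pi\<^sub>E I A" "Pi\<^sub>M I M" "A i"]
      by (auto simp: I.measure_times mult.commute)
  qed (use A in auto)
qed (use fin in simp_all)



interpretation UP: product_sigma_finite "\<lambda>_::nat. unit_iv"
  by (simp add: product_sigma_finite_def prob_unit_iv prob_space_imp_sigma_finite)

lemma prob_cube: "prob_space (cube n)"
  unfolding cube_def by (rule prob_space_PiM) (rule prob_unit_iv)

lemma prob_cube_wo: "prob_space (cube_wo n i)"
  unfolding cube_wo_def by (rule prob_space_PiM) (rule prob_unit_iv)

context fixes n i :: nat assumes ni: "i \<in> {1..n}"
begin

interpretation WU: pair_prob_space "cube_wo n i" unit_iv
  by (simp add: pair_prob_space_def pair_sigma_finite_def prob_cube_wo prob_unit_iv prob_space_imp_sigma_finite)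

lemma cube_ins: "cube n = Pi\<^sub>M (insert i ({1..n}-{i})) (\<lambda>_. unit_iv)"
  using ni unfolding cube_def by (simp add: insert_absorb)

lemma ins_meas: "(\<lambda>(y, t). y(i := t)) \<in> measurable (cube_wo n i \<Otimes>\<^sub>M unit_iv) (cube n)"
  unfolding cube_ins cube_wo_def by (rule measurable_add_dim)

lemma distr_N: "distr (cube_wo n i \<Otimes>\<^sub>M unit_iv) (cube n) (\<lambda>(y, t). y(i := t)) = cube n"
  unfolding cube_ins cube_wo_def by (rule UP.distr_add_dim) auto

lemma int_N_iff:
  fixes \<phi> :: "(nat \<Rightarrow> real) \<Rightarrow> real"
  assumes "\<phi> \<in> borel_measurable (cube n)"
  shows "integrable (cube_wo n i \<Otimes>\<^sub>M unit_iv) (\<lambda>(y, t). \<phi> (y(i := t))) \<longleftrightarrow> integrable (cube n) \<phi>"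
proof -
  have "integrable (cube n) \<phi> \<longleftrightarrow> integrable (distr (cube_wo n i \<Otimes>\<^sub>M unit_iv) (cube n) (\<lambda>(y, t). y(i := t))) \<phi>"
    by (simp add: distr_N)
  also have "\<dots> \<longleftrightarrow> integrable (cube_wo n i \<Otimes>\<^sub>M unit_iv) (\<lambda>p. \<phi> ((\<lambda>(y, t). y(i := t)) p))"
    by (rule integrable_distr_eq[OF ins_meas assms])
  finally show ?thesis by (simp add: case_prod_beta')
qed

lemma integral_N:
  fixes \<phi> :: "(nat \<Rightarrow> real) \<Rightarrow> real"
  assumes "\<phi> \<in> borel_measurable (cube n)"
  shows "(\<integral>p. (\<lambda>(y, t). \<phi> (y(i := t))) p \<partial>(cube_wo n i \<Otimes>\<^sub>M unit_iv)) = (\<integral>x. \<phi> x \<partial>cube n)"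
proof -
  have "(\<integral>x. \<phi> x \<partial>cube n) = (\<integral>x. \<phi> x \<partial>distr (cube_wo n i \<Otimes>\<^sub>M unit_iv) (cube n) (\<lambda>(y, t). y(i := t)))"
    by (simp add: distr_N)
  also have "\<dots> = (\<integral>p. \<phi> ((\<lambda>(y, t). y(i := t)) p) \<partial>(cube_wo n i \<Otimes>\<^sub>M unit_iv))"
    by (rule integral_distr[OF ins_meas assms])
  finally show ?thesis by (simp add: case_prod_beta')
qed

lemma meas_N:
  fixes \<phi> :: "(nat \<Rightarrow> real) \<Rightarrow> real"
  assumes "\<phi> \<in> borel_measurable (cube n)"
  shows "(\<lambda>(y, t). \<phi> (y(i := t))) \<in> borel_measurable (cube_wo n i \<Otimes>\<^sub>M unit_iv)"
  using measurable_comp[OF ins_meas assms] by (simp add: comp_def case_prod_beta')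

lemma int_fst_iff:
  fixes g :: "(nat \<Rightarrow> real) \<Rightarrow> real"
  assumes "g \<in> borel_measurable (cube_wo n i)"
  shows "integrable (cube_wo n i \<Otimes>\<^sub>M unit_iv) (\<lambda>p. g (fst p)) \<longleftrightarrow> integrable (cube_wo n i) g"
proof -
  have "integrable (cube_wo n i) g \<longleftrightarrow> integrable (distr (cube_wo n i \<Otimes>\<^sub>M unit_iv) (cube_wo n i) fst) g"
    by (simp add: prob_space.distr_pair_fst[OF prob_unit_iv])
  also have "\<dots> \<longleftrightarrow> integrable (cube_wo n i \<Otimes>\<^sub>M unit_iv) (\<lambda>p. g (fst p))"
    by (rule integrable_distr_eq[OF measurable_fst assms])
  finally show ?thesis by simp
qed

end


definition msec :: "nat \<Rightarrow> ((nat \<Rightarrow> real) \<Rightarrow> real) \<Rightarrow> (nat \<Rightarrow> real) \<Rightarrow> real" where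
  "msec i \<phi> y = (\<integral>t. \<phi> (y(i := t)) \<partial>unit_iv)"

definition Dn :: "nat \<Rightarrow> nat \<Rightarrow> ((nat \<Rightarrow> real) \<Rightarrow> real) \<Rightarrow> real" where
  "Dn n i \<phi> = (\<integral>x. (\<phi> x)\<^sup>2 \<partial>cube n) - (\<integral>y. (msec i \<phi> y)\<^sup>2 \<partial>cube_wo n i)"

lemma sobol_Dn: "sobol_total n i \<phi> = Dn n i \<phi> / Var n \<phi>"
  by (simp add: sobol_total_def Dn_def msec_def)

context fixes n i :: nat assumes ni: "i \<in> {1..n}"
begin

interpretation WU: pair_prob_space "cube_wo n i" unit_iv
  by (simp add: pair_prob_space_def pair_sigma_finite_def prob_cube_wo prob_unit_iv prob_space_imp_sigma_finite)

lemma core: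
  fixes \<phi> :: "(nat \<Rightarrow> real) \<Rightarrow> real"
  assumes m: "\<phi> \<in> borel_measurable (cube n)" and s: "integrable (cube n) (\<lambda>x. (\<phi> x)\<^sup>2)"
  shows "integrable (cube_wo n i \<Otimes>\<^sub>M unit_iv) (\<lambda>(y, t). (\<phi> (y(i := t)) - msec i \<phi> y)\<^sup>2)"
    and "Dn n i \<phi> = (\<integral>p. (\<lambda>(y, t). (\<phi> (y(i := t)) - msec i \<phi> y)\<^sup>2) p \<partial>(cube_wo n i \<Otimes>\<^sub>M unit_iv))"
    and "AE y in cube_wo n i. integrable unit_iv (\<lambda>t. \<phi> (y(i := t)))"
    and "msec i \<phi> \<in> borel_measurable (cube_wo n i)"
    and "integrable (cube_wo n i) (\<lambda>y. (msec i \<phi> y)\<^sup>2)"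
proof -
  interpret C: prob_space "cube n" by (rule prob_cube)
  have i1: "integrable (cube n) \<phi>" by (rule C.square_integrable_imp_integrable[OF m s])
  have Fm: "(\<lambda>(y, t). \<phi> (y(i := t))) \<in> borel_measurable (cube_wo n i \<Otimes>\<^sub>M unit_iv)"
    by (rule meas_N[OF ni m])
  have F2m: "(\<lambda>(y, t). (\<phi> (y(i := t)))\<^sup>2) \<in> borel_measurable (cube_wo n i \<Otimes>\<^sub>M unit_iv)"
    using meas_N[OF ni, of "\<lambda>x. (\<phi> x)\<^sup>2"] m by simp
  have Fi: "integrable (cube_wo n i \<Otimes>\<^sub>M unit_iv) (\<lambda>(y, t). \<phi> (y(i := t)))"
    using int_N_iff[OF ni m] i1 by simp
  have F2i: "integrable (cube_wo n i \<Otimes>\<^sub>M unit_iv) (\<lambda>(y, t). (\<phi> (y(i := t)))\<^sup>2)"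
    using int_N_iff[OF ni, of "\<lambda>x. (\<phi> x)\<^sup>2"] m s by simp
  show ae1: "AE y in cube_wo n i. integrable unit_iv (\<lambda>t. \<phi> (y(i := t)))"
    using WU.AE_integrable_fst'[OF Fi] by simp
  have ae2: "AE y in cube_wo n i. integrable unit_iv (\<lambda>t. (\<phi> (y(i := t)))\<^sup>2)"
    using WU.AE_integrable_fst'[OF F2i] by simp
  show mm: "msec i \<phi> \<in> borel_measurable (cube_wo n i)"
    unfolding msec_def
    by (rule sigma_finite_measure.borel_measurable_lebesgue_integral[OF prob_space_imp_sigma_finite[OF prob_unit_iv]])
       (use Fm in simp)
  have qi: "integrable (cube_wo n i) (\<lambda>y. \<integral>t. (\<phi> (y(i := t)))\<^sup>2 \<partial>unit_iv)"
    using WU.integrable_fst'[OF F2i] by simp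
  have key: "AE y in cube_wo n i. (\<integral>t. (\<phi> (y(i := t)) - msec i \<phi> y)\<^sup>2 \<partial>unit_iv)
       = (\<integral>t. (\<phi> (y(i := t)))\<^sup>2 \<partial>unit_iv) - (msec i \<phi> y)\<^sup>2"
    using ae1 ae2
  proof eventually_elim
    case (elim y)
    let ?a = "\<lambda>t. \<phi> (y(i := t))" and ?m = "msec i \<phi> y"
    have "(\<integral>t. (?a t - ?m)\<^sup>2 \<partial>unit_iv) = (\<integral>t. ((?a t)\<^sup>2 - 2 * ?m * ?a t) + ?m\<^sup>2 \<partial>unit_iv)"
      by (rule Bochner_Integration.integral_cong) (auto simp: power2_diff)
    also have "\<dots> = (\<integral>t. (?a t)\<^sup>2 \<partial>unit_iv) - 2 * ?m * (\<integral>t. ?a t \<partial>unit_iv) + ?m\<^sup>2"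
      using elim by (simp add: WU.M2.prob_space)
    also have "\<dots> = (\<integral>t. (?a t)\<^sup>2 \<partial>unit_iv) - ?m\<^sup>2"
      by (simp add: msec_def power2_eq_square)
    finally show ?case .
  qed
  have bound: "AE y in cube_wo n i. (msec i \<phi> y)\<^sup>2 \<le> (\<integral>t. (\<phi> (y(i := t)))\<^sup>2 \<partial>unit_iv)"
    using key
  proof eventually_elim
    case (elim y)
    have "0 \<le> (\<integral>t. (\<phi> (y(i := t)) - msec i \<phi> y)\<^sup>2 \<partial>unit_iv)" by simp
    then show ?case using elim by simp
  qed
  show m2i: "integrable (cube_wo n i) (\<lambda>y. (msec i \<phi> y)\<^sup>2)"
    by (rule Bochner_Integration.integrable_bound[OF qi]) (use mm bound in auto)
  have m2Ni: "integrable (cube_wo n i \<Otimes>\<^sub>M unit_iv) (\<lambda>p. (msec i \<phi> (fst p))\<^sup>2)"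
    using int_fst_iff[OF ni, of "\<lambda>y. (msec i \<phi> y)\<^sup>2"] mm m2i by simp
  have Gm: "(\<lambda>(y, t). (\<phi> (y(i := t)) - msec i \<phi> y)\<^sup>2) \<in> borel_measurable (cube_wo n i \<Otimes>\<^sub>M unit_iv)"
    using Fm mm by (simp add: case_prod_beta')
  show Gi: "integrable (cube_wo n i \<Otimes>\<^sub>M unit_iv) (\<lambda>(y, t). (\<phi> (y(i := t)) - msec i \<phi> y)\<^sup>2)"
  proof (rule Bochner_Integration.integrable_bound[OF _ Gm])
    show "integrable (cube_wo n i \<Otimes>\<^sub>M unit_iv) (\<lambda>p. 2 * (\<lambda>(y, t). (\<phi> (y(i := t)))\<^sup>2) p + 2 * (msec i \<phi> (fst p))\<^sup>2)"
      using F2i m2Ni by auto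
    show "AE x in cube_wo n i \<Otimes>\<^sub>M unit_iv. norm ((\<lambda>(y, t). (\<phi> (y(i := t)) - msec i \<phi> y)\<^sup>2) x)
        \<le> norm (2 * (\<lambda>(y, t). (\<phi> (y(i := t)))\<^sup>2) x + 2 * (msec i \<phi> (fst x))\<^sup>2)"
    proof (rule AE_I2)
      fix x :: "(nat \<Rightarrow> real) \<times> real"
      obtain y t where x: "x = (y, t)" by (cases x)
      have "(a - b)\<^sup>2 \<le> 2 * a\<^sup>2 + 2 * b\<^sup>2" for a b :: real
        using zero_le_power2[of "a+b"] by (simp add: power2_diff power2_sum)
      then show "norm ((\<lambda>(y, t). (\<phi> (y(i := t)) - msec i \<phi> y)\<^sup>2) x)
        \<le> norm (2 * (\<lambda>(y, t). (\<phi> (y(i := t)))\<^sup>2) x + 2 * (msec i \<phi> (fst x))\<^sup>2)"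
        unfolding x by simp
    qed
  qed
  have "(\<integral>p. (\<lambda>(y, t). (\<phi> (y(i := t)) - msec i \<phi> y)\<^sup>2) p \<partial>(cube_wo n i \<Otimes>\<^sub>M unit_iv))
      = (\<integral>y. (\<integral>t. (\<phi> (y(i := t)) - msec i \<phi> y)\<^sup>2 \<partial>unit_iv) \<partial>cube_wo n i)"
    using WU.integral_fst'[OF Gi] by simp
  also have "\<dots> = (\<integral>y. (\<integral>t. (\<phi> (y(i := t)))\<^sup>2 \<partial>unit_iv) - (msec i \<phi> y)\<^sup>2 \<partial>cube_wo n i)"
    by (rule integral_cong_AE) (use key Gm mm qi in auto)
  also have "\<dots> = (\<integral>y. (\<integral>t. (\<phi> (y(i := t)))\<^sup>2 \<partial>unit_iv) \<partial>cube_wo n i) - (\<integral>y. (msec i \<phi> y)\<^sup>2 \<partial>cube_wo n i)"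
    by (rule Bochner_Integration.integral_diff[OF qi m2i])
  also have "(\<integral>y. (\<integral>t. (\<phi> (y(i := t)))\<^sup>2 \<partial>unit_iv) \<partial>cube_wo n i) = (\<integral>x. (\<phi> x)\<^sup>2 \<partial>cube n)"
    using WU.integral_fst'[OF F2i] integral_N[OF ni, of "\<lambda>x. (\<phi> x)\<^sup>2"] m by simp
  finally have eq: "(\<integral>p. (\<lambda>(y, t). (\<phi> (y(i := t)) - msec i \<phi> y)\<^sup>2) p \<partial>(cube_wo n i \<Otimes>\<^sub>M unit_iv))
     = (\<integral>x. (\<phi> x)\<^sup>2 \<partial>cube n) - (\<integral>y. (msec i \<phi> y)\<^sup>2 \<partial>cube_wo n i)" .
  show "Dn n i \<phi> = (\<integral>p. (\<lambda>(y, t). (\<phi> (y(i := t)) - msec i \<phi> y)\<^sup>2) p \<partial>(cube_wo n i \<Otimes>\<^sub>M unit_iv))"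
    unfolding Dn_def using eq by (rule sym)
qed

end


lemma quad_bound:
  fixes A B C :: real
  assumes q: "\<And>s. 0 \<le> A + 2 * s * C + s\<^sup>2 * B" and A: "0 \<le> A" and B: "0 \<le> B"
  shows "C \<le> sqrt A * sqrt B"
proof (cases "C \<le> 0")
  case True
  have "0 \<le> sqrt A * sqrt B" using A B by simp
  with True show ?thesis by linarith
next
  case False
  then have C: "C > 0" by simp
  show ?thesis
  proof (cases "B = 0")
    case True
    have "0 \<le> A + 2 * (- (A + 1) / (2 * C)) * C" using q[of "- (A + 1) / (2 * C)"] True by simp
    also have "\<dots> = -1" using C by (simp add: field_simps)
    finally show ?thesis by simp
  next
    case False
    then have Bp: "B > 0" using B by simp
    have "0 \<le> A + 2 * (- C / B) * C + (- C / B)\<^sup>2 * B" by (rule q)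
    also have "\<dots> = A - C\<^sup>2 / B" using Bp by (simp add: field_simps power2_eq_square)
    finally have "C\<^sup>2 \<le> A * B" using Bp by (simp add: field_simps)
    then have "sqrt (C\<^sup>2) \<le> sqrt (A * B)" by (rule real_sqrt_le_mono)
    then show ?thesis using C by (simp add: real_sqrt_mult)
  qed
qed

lemma minkowski:
  fixes a b :: "'a \<Rightarrow> real"
  assumes am: "a \<in> borel_measurable M" and bm: "b \<in> borel_measurable M"
    and ai: "integrable M (\<lambda>x. (a x)\<^sup>2)" and bi: "integrable M (\<lambda>x. (b x)\<^sup>2)"
  shows "integrable M (\<lambda>x. (a x + b x)\<^sup>2)"
    and "(\<integral>x. (a x + b x)\<^sup>2 \<partial>M) \<le> (sqrt (\<integral>x. (a x)\<^sup>2 \<partial>M) + sqrt (\<integral>x. (b x)\<^sup>2 \<partial>M))\<^sup>2"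
proof -
  have abi: "integrable M (\<lambda>x. a x * b x)"
  proof (rule Bochner_Integration.integrable_bound[where f="\<lambda>x. (a x)\<^sup>2 + (b x)\<^sup>2"])
    show "integrable M (\<lambda>x. (a x)\<^sup>2 + (b x)\<^sup>2)" using ai bi by simp
    show "(\<lambda>x. a x * b x) \<in> borel_measurable M" using am bm by simp
    show "AE x in M. norm (a x * b x) \<le> norm ((a x)\<^sup>2 + (b x)\<^sup>2)"
    proof (rule AE_I2)
      fix x
      have "2 * (\<bar>a x\<bar> * \<bar>b x\<bar>) \<le> (a x)\<^sup>2 + (b x)\<^sup>2"
        using zero_le_power2[of "\<bar>a x\<bar> - \<bar>b x\<bar>"] by (simp add: power2_diff)
      moreover have "0 \<le> \<bar>a x\<bar> * \<bar>b x\<bar>" by simp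
      ultimately have "\<bar>a x\<bar> * \<bar>b x\<bar> \<le> (a x)\<^sup>2 + (b x)\<^sup>2" by linarith
      then have "\<bar>a x * b x\<bar> \<le> (a x)\<^sup>2 + (b x)\<^sup>2" by (simp add: abs_mult)
      then show "norm (a x * b x) \<le> norm ((a x)\<^sup>2 + (b x)\<^sup>2)" by simp
    qed
  qed
  let ?A = "\<integral>x. (a x)\<^sup>2 \<partial>M" and ?B = "\<integral>x. (b x)\<^sup>2 \<partial>M" and ?C = "\<integral>x. a x * b x \<partial>M"
  have exp: "(\<integral>x. (a x + s * b x)\<^sup>2 \<partial>M) = ?A + 2 * s * ?C + s\<^sup>2 * ?B"
       "integrable M (\<lambda>x. (a x + s * b x)\<^sup>2)" for s
  proof -
    have eq: "(\<lambda>x. (a x + s * b x)\<^sup>2) = (\<lambda>x. (a x)\<^sup>2 + (2 * s) * (a x * b x) + s\<^sup>2 * (b x)\<^sup>2)"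
      by (rule ext) (simp add: power2_sum power_mult_distrib algebra_simps)
    show "integrable M (\<lambda>x. (a x + s * b x)\<^sup>2)" unfolding eq using ai bi abi by simp
    show "(\<integral>x. (a x + s * b x)\<^sup>2 \<partial>M) = ?A + 2 * s * ?C + s\<^sup>2 * ?B"
      unfolding eq using ai bi abi by simp
  qed
  have "?C \<le> sqrt ?A * sqrt ?B"
  proof (rule quad_bound)
    fix s show "0 \<le> ?A + 2 * s * ?C + s\<^sup>2 * ?B" using exp(1)[of s, symmetric] by simp
  qed simp_all
  show "integrable M (\<lambda>x. (a x + b x)\<^sup>2)" using exp(2)[of 1] by simp
  have "(\<integral>x. (a x + b x)\<^sup>2 \<partial>M) = ?A + 2 * ?C + ?B" using exp(1)[of 1] by simp
  also have "\<dots> \<le> ?A + 2 * (sqrt ?A * sqrt ?B) + ?B" using \<open>?C \<le> _\<close> by simp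
  also have "\<dots> = (sqrt ?A + sqrt ?B)\<^sup>2"
    by (simp add: power2_sum)
  finally show "(\<integral>x. (a x + b x)\<^sup>2 \<partial>M) \<le> (sqrt ?A + sqrt ?B)\<^sup>2" .
qed



lemma var_expand:
  fixes \<phi> :: "(nat \<Rightarrow> real) \<Rightarrow> real"
  assumes m: "\<phi> \<in> borel_measurable (cube n)" and s: "integrable (cube n) (\<lambda>x. (\<phi> x)\<^sup>2)"
  shows "Var n \<phi> = (\<integral>x. (\<phi> x - mean0 n \<phi>)\<^sup>2 \<partial>cube n)"
    and "integrable (cube n) (\<lambda>x. (\<phi> x - mean0 n \<phi>)\<^sup>2)"
proof -
  interpret C: prob_space "cube n" by (rule prob_cube)
  have i1: "integrable (cube n) \<phi>" by (rule C.square_integrable_imp_integrable[OF m s])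
  let ?\<mu> = "mean0 n \<phi>"
  have eq: "(\<lambda>x. (\<phi> x - ?\<mu>)\<^sup>2) = (\<lambda>x. ((\<phi> x)\<^sup>2 - (2 * ?\<mu>) * \<phi> x) + ?\<mu>\<^sup>2)"
    by (rule ext) (simp add: power2_diff)
  show "integrable (cube n) (\<lambda>x. (\<phi> x - mean0 n \<phi>)\<^sup>2)" unfolding eq using s i1 by simp
  have "(\<integral>x. (\<phi> x - ?\<mu>)\<^sup>2 \<partial>cube n) = (\<integral>x. (\<phi> x)\<^sup>2 \<partial>cube n) - 2 * ?\<mu> * ?\<mu> + ?\<mu>\<^sup>2"
    unfolding eq using s i1 by (simp add: C.prob_space mean0_def)
  then show "Var n \<phi> = (\<integral>x. (\<phi> x - mean0 n \<phi>)\<^sup>2 \<partial>cube n)"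
    by (simp add: Var_def power2_eq_square)
qed

lemma var_pos:
  assumes "admissible n \<phi>"
  shows "Var n \<phi> > 0"
proof -
  have m: "\<phi> \<in> borel_measurable (cube n)" and s: "integrable (cube n) (\<lambda>x. (\<phi> x)\<^sup>2)"
    and nc: "\<not> (\<exists>c. AE x in cube n. \<phi> x = c)" using assms by (auto simp: admissible_def)
  note ve = var_expand[OF m s]
  have ge: "Var n \<phi> \<ge> 0" unfolding ve(1) by simp
  have "Var n \<phi> \<noteq> 0"
  proof
    assume "Var n \<phi> = 0"
    then have "AE x in cube n. (\<phi> x - mean0 n \<phi>)\<^sup>2 = 0"
      using integral_nonneg_eq_0_iff_AE[OF ve(2)] ve(1) by simp
    then have "AE x in cube n. \<phi> x = mean0 n \<phi>" by eventually_elim simp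
    with nc show False by blast
  qed
  with ge show ?thesis by simp
qed

lemma sq_add:
  fixes f h :: "(nat \<Rightarrow> real) \<Rightarrow> real"
  assumes "f \<in> borel_measurable M" "integrable M (\<lambda>x. (f x)\<^sup>2)"
    and "h \<in> borel_measurable M" "integrable M (\<lambda>x. (h x)\<^sup>2)"
  shows "integrable M (\<lambda>x. f x * h x)"
proof (rule Bochner_Integration.integrable_bound[where f="\<lambda>x. (f x)\<^sup>2 + (h x)\<^sup>2"])
  show "integrable M (\<lambda>x. (f x)\<^sup>2 + (h x)\<^sup>2)" using assms by simp
  show "(\<lambda>x. f x * h x) \<in> borel_measurable M" using assms by simp
  show "AE x in M. norm (f x * h x) \<le> norm ((f x)\<^sup>2 + (h x)\<^sup>2)"
  proof (rule AE_I2)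
    fix x
    have "2 * (\<bar>f x\<bar> * \<bar>h x\<bar>) \<le> (f x)\<^sup>2 + (h x)\<^sup>2"
      using zero_le_power2[of "\<bar>f x\<bar> - \<bar>h x\<bar>"] by (simp add: power2_diff)
    moreover have "0 \<le> \<bar>f x\<bar> * \<bar>h x\<bar>" by simp
    ultimately have "\<bar>f x\<bar> * \<bar>h x\<bar> \<le> (f x)\<^sup>2 + (h x)\<^sup>2" by linarith
    then show "norm (f x * h x) \<le> norm ((f x)\<^sup>2 + (h x)\<^sup>2)" by (simp add: abs_mult)
  qed
qed

lemma var_add:
  fixes f h :: "(nat \<Rightarrow> real) \<Rightarrow> real"
  assumes fm: "f \<in> borel_measurable (cube n)" and fs: "integrable (cube n) (\<lambda>x. (f x)\<^sup>2)"
    and hm: "h \<in> borel_measurable (cube n)" and hs: "integrable (cube n) (\<lambda>x. (h x)\<^sup>2)"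
  shows "Var n (\<lambda>x. f x + h x) = Var n f + Var n h + 2 * Cov n f h"
proof -
  interpret C: prob_space "cube n" by (rule prob_cube)
  have fi: "integrable (cube n) f" by (rule C.square_integrable_imp_integrable[OF fm fs])
  have hi: "integrable (cube n) h" by (rule C.square_integrable_imp_integrable[OF hm hs])
  have fhi: "integrable (cube n) (\<lambda>x. f x * h x)" by (rule sq_add[OF fm fs hm hs])
  have eq: "(\<lambda>x. (f x + h x)\<^sup>2) = (\<lambda>x. (f x)\<^sup>2 + 2 * (f x * h x) + (h x)\<^sup>2)"
    by (rule ext) (simp add: power2_sum)
  have "(\<integral>x. (f x + h x)\<^sup>2 \<partial>cube n) = (\<integral>x. (f x)\<^sup>2 \<partial>cube n) + 2 * (\<integral>x. f x * h x \<partial>cube n) + (\<integral>x. (h x)\<^sup>2 \<partial>cube n)"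
    unfolding eq using fs hs fhi by simp
  moreover have "mean0 n (\<lambda>x. f x + h x) = mean0 n f + mean0 n h"
    unfolding mean0_def using fi hi by simp
  ultimately show ?thesis
    unfolding Var_def Cov_def by (simp add: power2_sum)
qed

context fixes n i :: nat assumes ni: "i \<in> {1..n}"
begin

interpretation WU: pair_prob_space "cube_wo n i" unit_iv
  by (simp add: pair_prob_space_def pair_sigma_finite_def prob_cube_wo prob_unit_iv prob_space_imp_sigma_finite)

lemma AE_fstI:
  assumes "AE y in cube_wo n i. P y"
  shows "AE p in cube_wo n i \<Otimes>\<^sub>M unit_iv. P (fst p)"
proof -
  from assms obtain S where S: "{y \<in> space (cube_wo n i). \<not> P y} \<subseteq> S" "emeasure (cube_wo n i) S = 0" "S \<in> sets (cube_wo n i)"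
    by (rule AE_E)
  have "S \<times> space unit_iv \<in> null_sets (cube_wo n i \<Otimes>\<^sub>M unit_iv)"
    using S(2,3) by (intro sigma_finite_measure.times_in_null_sets1[OF prob_space_imp_sigma_finite[OF prob_unit_iv]]) auto
  moreover have "{p \<in> space (cube_wo n i \<Otimes>\<^sub>M unit_iv). \<not> P (fst p)} \<subseteq> S \<times> space unit_iv"
    using S(1) by (auto simp: space_pair_measure)
  ultimately show ?thesis by (rule AE_I')
qed

lemma Dn_nonneg:
  assumes m: "\<phi> \<in> borel_measurable (cube n)" and s: "integrable (cube n) (\<lambda>x. (\<phi> x)\<^sup>2)"
  shows "Dn n i \<phi> \<ge> 0"
  unfolding core(2)[OF ni m s] by (rule Bochner_Integration.integral_nonneg) (simp add: case_prod_beta')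

lemma triangle:
  fixes f h :: "(nat \<Rightarrow> real) \<Rightarrow> real"
  assumes fm: "f \<in> borel_measurable (cube n)" and fs: "integrable (cube n) (\<lambda>x. (f x)\<^sup>2)"
    and hm: "h \<in> borel_measurable (cube n)" and hs: "integrable (cube n) (\<lambda>x. (h x)\<^sup>2)"
  shows "Dn n i (\<lambda>x. f x + h x) \<le> (sqrt (Dn n i f) + sqrt (Dn n i h))\<^sup>2"
proof -
  let ?N = "cube_wo n i \<Otimes>\<^sub>M unit_iv"
  define a where "a p = f ((fst p)(i := snd p)) - msec i f (fst p)" for p
  define b where "b p = h ((fst p)(i := snd p)) - msec i h (fst p)" for p
  define c where "c p = (f ((fst p)(i := snd p)) + h ((fst p)(i := snd p))) - msec i (\<lambda>x. f x + h x) (fst p)" for p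
  have gm: "(\<lambda>x. f x + h x) \<in> borel_measurable (cube n)" using fm hm by simp
  have gs: "integrable (cube n) (\<lambda>x. (f x + h x)\<^sup>2)" by (rule minkowski(1)[OF fm hm fs hs])
  have am: "a \<in> borel_measurable ?N"
    unfolding a_def using meas_N[OF ni fm] core(4)[OF ni fm fs]
    by (simp add: case_prod_beta')
  have bm: "b \<in> borel_measurable ?N"
    unfolding b_def using meas_N[OF ni hm] core(4)[OF ni hm hs]
    by (simp add: case_prod_beta')
  have cm: "c \<in> borel_measurable ?N"
    unfolding c_def using meas_N[OF ni gm] core(4)[OF ni gm gs]
    by (simp add: case_prod_beta')
  have ai: "integrable ?N (\<lambda>p. (a p)\<^sup>2)" using core(1)[OF ni fm fs] by (simp add: a_def case_prod_beta')
  have bi: "integrable ?N (\<lambda>p. (b p)\<^sup>2)" using core(1)[OF ni hm hs] by (simp add: b_def case_prod_beta')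
  have Da: "Dn n i f = (\<integral>p. (a p)\<^sup>2 \<partial>?N)" using core(2)[OF ni fm fs] by (simp add: a_def case_prod_beta')
  have Db: "Dn n i h = (\<integral>p. (b p)\<^sup>2 \<partial>?N)" using core(2)[OF ni hm hs] by (simp add: b_def case_prod_beta')
  have Dc: "Dn n i (\<lambda>x. f x + h x) = (\<integral>p. (c p)\<^sup>2 \<partial>?N)" using core(2)[OF ni gm gs] by (simp add: c_def case_prod_beta')
  have "AE y in cube_wo n i. msec i (\<lambda>x. f x + h x) y = msec i f y + msec i h y"
    using core(3)[OF ni fm fs] core(3)[OF ni hm hs]
    by eventually_elim (simp add: msec_def)
  then have "AE p in ?N. msec i (\<lambda>x. f x + h x) (fst p) = msec i f (fst p) + msec i h (fst p)"
    by (rule AE_fstI)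
  then have "AE p in ?N. (c p)\<^sup>2 = (a p + b p)\<^sup>2"
    by eventually_elim (simp add: a_def b_def c_def algebra_simps)
  then have "(\<integral>p. (c p)\<^sup>2 \<partial>?N) = (\<integral>p. (a p + b p)\<^sup>2 \<partial>?N)"
    by (rule integral_cong_AE[rotated 2]) (use am bm cm in simp_all)
  also have "\<dots> \<le> (sqrt (\<integral>p. (a p)\<^sup>2 \<partial>?N) + sqrt (\<integral>p. (b p)\<^sup>2 \<partial>?N))\<^sup>2"
    by (rule minkowski(2)[OF am bm ai bi])
  finally show ?thesis using Da Db Dc by simp
qed

end


lemma part1:
  fixes f h :: "(nat \<Rightarrow> real) \<Rightarrow> real"
  assumes ni: "i \<in> {1..n}" and af: "admissible n f" and ah: "admissible n h" and cov: "Cov n f h \<ge> 0"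
  shows "sobol_total n i (\<lambda>x. f x + h x)
              \<le> (sqrt (sobol_total n i f * Var n f) + sqrt (sobol_total n i h * Var n h))\<^sup>2
                 / (Var n f + Var n h)
          \<and> sobol_total n i (\<lambda>x. f x + h x)
              \<le> 2 * max (sobol_total n i f) (sobol_total n i h)"
proof -
  have fm: "f \<in> borel_measurable (cube n)" and fs: "integrable (cube n) (\<lambda>x. (f x)\<^sup>2)"
    using af by (auto simp: admissible_def)
  have hm: "h \<in> borel_measurable (cube n)" and hs: "integrable (cube n) (\<lambda>x. (h x)\<^sup>2)"
    using ah by (auto simp: admissible_def)
  have gm: "(\<lambda>x. f x + h x) \<in> borel_measurable (cube n)" using fm hm by simp
  have gs: "integrable (cube n) (\<lambda>x. (f x + h x)\<^sup>2)" by (rule minkowski(1)[OF fm hm fs hs])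
  have Vf: "Var n f > 0" by (rule var_pos[OF af])
  have Vh: "Var n h > 0" by (rule var_pos[OF ah])
  have Vg: "Var n (\<lambda>x. f x + h x) = Var n f + Var n h + 2 * Cov n f h" by (rule var_add[OF fm fs hm hs])
  have Df: "Dn n i f \<ge> 0" by (rule Dn_nonneg[OF ni fm fs])
  have Dh: "Dn n i h \<ge> 0" by (rule Dn_nonneg[OF ni hm hs])
  have Dg: "Dn n i (\<lambda>x. f x + h x) \<ge> 0" by (rule Dn_nonneg[OF ni gm gs])
  have tri: "Dn n i (\<lambda>x. f x + h x) \<le> (sqrt (Dn n i f) + sqrt (Dn n i h))\<^sup>2"
    by (rule triangle[OF ni fm fs hm hs])
  define Sf where "Sf = sobol_total n i f"
  define Sh where "Sh = sobol_total n i h"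
  have SfV: "sobol_total n i f * Var n f = Dn n i f" using Vf by (simp add: sobol_Dn)
  have ShV: "sobol_total n i h * Var n h = Dn n i h" using Vh by (simp add: sobol_Dn)
  have "sobol_total n i (\<lambda>x. f x + h x) = Dn n i (\<lambda>x. f x + h x) / Var n (\<lambda>x. f x + h x)"
    by (simp add: sobol_Dn)
  also have "\<dots> \<le> Dn n i (\<lambda>x. f x + h x) / (Var n f + Var n h)"
    using Vf Vh Vg cov Dg by (intro divide_left_mono) auto
  also have "\<dots> \<le> (sqrt (Dn n i f) + sqrt (Dn n i h))\<^sup>2 / (Var n f + Var n h)"
    using Vf Vh tri by (intro divide_right_mono) auto
  finally have first: "sobol_total n i (\<lambda>x. f x + h x) \<le> (sqrt (Dn n i f) + sqrt (Dn n i h))\<^sup>2 / (Var n f + Var n h)" .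
  have "(sqrt (Dn n i f) + sqrt (Dn n i h))\<^sup>2 \<le> 2 * (Dn n i f + Dn n i h)"
    using zero_le_power2[of "sqrt (Dn n i f) - sqrt (Dn n i h)"] Df Dh
    by (simp add: power2_sum power2_diff)
  also have "\<dots> = 2 * (Sf * Var n f + Sh * Var n h)" using SfV ShV by (simp add: Sf_def Sh_def)
  also have "\<dots> \<le> 2 * (max Sf Sh * Var n f + max Sf Sh * Var n h)"
    using Vf Vh by (intro mult_left_mono add_mono mult_right_mono) auto
  also have "\<dots> = 2 * max Sf Sh * (Var n f + Var n h)" by (simp add: algebra_simps)
  finally have "(sqrt (Dn n i f) + sqrt (Dn n i h))\<^sup>2 / (Var n f + Var n h) \<le> 2 * max Sf Sh"
    using Vf Vh by (simp add: divide_le_eq)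
  with first show ?thesis using SfV ShV by (simp add: Sf_def Sh_def)
qed



lemma PiU_prob: "prob_space (Pi\<^sub>M K (\<lambda>_::nat. unit_iv))"
  by (rule prob_space_PiM) (rule prob_unit_iv)

lemma PiU_coord: "x \<in> space (Pi\<^sub>M K (\<lambda>_::nat. unit_iv)) \<Longrightarrow> k \<in> K \<Longrightarrow> 0 < x k \<and> x k < 1"
  by (auto simp: space_PiM PiE_def Pi_def unit_iv_space)

lemma PiU_int_bounded:
  fixes g :: "(nat \<Rightarrow> real) \<Rightarrow> real"
  assumes "g \<in> borel_measurable (Pi\<^sub>M K (\<lambda>_::nat. unit_iv))"
    and "\<And>x. x \<in> space (Pi\<^sub>M K (\<lambda>_::nat. unit_iv)) \<Longrightarrow> \<bar>g x\<bar> \<le> B"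
  shows "integrable (Pi\<^sub>M K (\<lambda>_::nat. unit_iv)) g"
proof -
  interpret P: prob_space "Pi\<^sub>M K (\<lambda>_::nat. unit_iv)" by (rule PiU_prob)
  show ?thesis by (rule P.integrable_const_bound[where B=B]) (use assms in auto)
qed

lemma PiU_meas_coord: "k \<in> K \<Longrightarrow> (\<lambda>x. x k) \<in> borel_measurable (Pi\<^sub>M K (\<lambda>_::nat. unit_iv))"
proof -
  assume k: "k \<in> K"
  have a: "(\<lambda>x. x k) \<in> measurable (Pi\<^sub>M K (\<lambda>_::nat. unit_iv)) unit_iv"
    using k by (rule measurable_component_singleton)
  have b: "(\<lambda>t::real. t) \<in> borel_measurable unit_iv"
    unfolding unit_iv_def by (intro measurable_restrict_space1) simp
  have "(\<lambda>t::real. t) \<circ> (\<lambda>x. x k) \<in> borel_measurable (Pi\<^sub>M K (\<lambda>_::nat. unit_iv))"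
    by (rule measurable_comp[OF a b])
  then show ?thesis by (simp add: comp_def)
qed

lemma int_x1:
  assumes "k \<in> K"
  shows "integrable (Pi\<^sub>M K (\<lambda>_::nat. unit_iv)) (\<lambda>x. x k)"
proof (rule PiU_int_bounded[where B=1])
  show "(\<lambda>x. x k) \<in> borel_measurable (Pi\<^sub>M K (\<lambda>_::nat. unit_iv))"
    using PiU_meas_coord[OF assms] by simp
  fix x assume "x \<in> space (Pi\<^sub>M K (\<lambda>_::nat. unit_iv))"
  then have "0 < x k" "x k < 1" using PiU_coord assms by auto
  then show "\<bar>x k\<bar> \<le> 1" by simp
qed

lemma int_x2:
  assumes "k \<in> K"
  shows "integrable (Pi\<^sub>M K (\<lambda>_::nat. unit_iv)) (\<lambda>x. (x k)\<^sup>2)"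
proof (rule PiU_int_bounded[where B=1])
  show "(\<lambda>x. (x k)\<^sup>2) \<in> borel_measurable (Pi\<^sub>M K (\<lambda>_::nat. unit_iv))"
    using PiU_meas_coord[OF assms] by simp
  fix x assume "x \<in> space (Pi\<^sub>M K (\<lambda>_::nat. unit_iv))"
  then have "0 < x k" "x k < 1" using PiU_coord assms by auto
  then show "\<bar>(x k)\<^sup>2\<bar> \<le> 1" by (simp add: power_le_one abs_le_iff)
qed

lemma int_x11:
  assumes "k \<in> K" "l \<in> K"
  shows "integrable (Pi\<^sub>M K (\<lambda>_::nat. unit_iv)) (\<lambda>x. x k * x l)"
proof (rule PiU_int_bounded[where B=1])
  show "(\<lambda>x. x k * x l) \<in> borel_measurable (Pi\<^sub>M K (\<lambda>_::nat. unit_iv))"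
    using PiU_meas_coord[OF assms(1)] PiU_meas_coord[OF assms(2)] by simp
  fix x assume "x \<in> space (Pi\<^sub>M K (\<lambda>_::nat. unit_iv))"
  then have "0 < x k" "x k < 1" "0 < x l" "x l < 1" using PiU_coord assms by auto
  then show "\<bar>x k * x l\<bar> \<le> 1" by (simp add: abs_mult mult_le_one)
qed

lemma PiU_integral_coord:
  fixes p :: "real \<Rightarrow> real"
  assumes K: "finite K" "k \<in> K" and p: "integrable unit_iv p"
  shows "(\<integral>x. p (x k) \<partial>Pi\<^sub>M K (\<lambda>_::nat. unit_iv)) = (\<integral>t. p t \<partial>unit_iv)"
proof -
  interpret U: prob_space unit_iv by (rule prob_unit_iv)
  have "(\<integral>x. (\<Prod>k'\<in>K. (if k' = k then p else (\<lambda>_. 1)) (x k')) \<partial>Pi\<^sub>M K (\<lambda>_::nat. unit_iv))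
     = (\<Prod>k'\<in>K. integral\<^sup>L unit_iv (if k' = k then p else (\<lambda>_. 1)))"
    by (rule UP.product_integral_prod) (use K p U.integrable_const in auto)
  moreover have "(\<Prod>k'\<in>K. (if k' = k then p else (\<lambda>_. 1)) (x k')) = p (x k)" for x
  proof -
    have "(\<Prod>k'\<in>K. (if k' = k then p else (\<lambda>_. 1)) (x k')) = (\<Prod>k'\<in>K. if k' = k then p (x k) else 1)"
      by (intro prod.cong) auto
    also have "\<dots> = p (x k)" using K by simp
    finally show ?thesis .
  qed
  moreover have "(\<Prod>k'\<in>K. integral\<^sup>L unit_iv (if k' = k then p else (\<lambda>_. 1))) = (\<integral>t. p t \<partial>unit_iv)"
  proof -
    have "(\<Prod>k'\<in>K. integral\<^sup>L unit_iv (if k' = k then p else (\<lambda>_. 1))) = (\<Prod>k'\<in>K. if k' = k then integral\<^sup>L unit_iv p else 1)"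
      by (intro prod.cong) (auto simp: U.prob_space)
    also have "\<dots> = (\<integral>t. p t \<partial>unit_iv)" using K by simp
    finally show ?thesis .
  qed
  ultimately show ?thesis by simp
qed

lemma PiU_integral_coord2:
  fixes p q :: "real \<Rightarrow> real"
  assumes K: "finite K" "k \<in> K" "l \<in> K" "k \<noteq> l" and p: "integrable unit_iv p" and q: "integrable unit_iv q"
  shows "(\<integral>x. p (x k) * q (x l) \<partial>Pi\<^sub>M K (\<lambda>_::nat. unit_iv)) = (\<integral>t. p t \<partial>unit_iv) * (\<integral>t. q t \<partial>unit_iv)"
proof -
  interpret U: prob_space unit_iv by (rule prob_unit_iv)
  let ?F = "\<lambda>k'. if k' = k then p else if k' = l then q else (\<lambda>_. 1)"
  have "(\<integral>x. (\<Prod>k'\<in>K. ?F k' (x k')) \<partial>Pi\<^sub>M K (\<lambda>_::nat. unit_iv)) = (\<Prod>k'\<in>K. integral\<^sup>L unit_iv (?F k'))"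
    by (rule UP.product_integral_prod) (use K p q U.integrable_const in auto)
  moreover have "(\<Prod>k'\<in>K. ?F k' (x k')) = p (x k) * q (x l)" for x
  proof -
    have "(\<Prod>k'\<in>K. ?F k' (x k')) = (\<Prod>k'\<in>K. (if k' = k then p (x k) else 1) * (if k' = l then q (x l) else 1))"
      using K by (intro prod.cong) auto
    also have "\<dots> = p (x k) * q (x l)" using K by (simp add: prod.distrib prod.delta)
    finally show ?thesis .
  qed
  moreover have "(\<Prod>k'\<in>K. integral\<^sup>L unit_iv (?F k')) = (\<integral>t. p t \<partial>unit_iv) * (\<integral>t. q t \<partial>unit_iv)"
  proof -
    have "(\<Prod>k'\<in>K. integral\<^sup>L unit_iv (?F k')) = (\<Prod>k'\<in>K. (if k' = k then integral\<^sup>L unit_iv p else 1) * (if k' = l then integral\<^sup>L unit_iv q else 1))"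
      using K by (intro prod.cong) (auto simp: prob_space.prob_space[OF prob_unit_iv])
    also have "\<dots> = (\<integral>t. p t \<partial>unit_iv) * (\<integral>t. q t \<partial>unit_iv)" using K by (simp add: prod.distrib prod.delta)
    finally show ?thesis .
  qed
  ultimately show ?thesis by simp
qed

lemma iv_int_id: "integrable unit_iv (\<lambda>t. t)"
  by (rule unit_iv_bounded_integrable[where B=1]) auto

lemma iv_int_sq: "integrable unit_iv (\<lambda>t. t\<^sup>2)"
  by (rule unit_iv_bounded_integrable[where B=1]) (auto simp: power_le_one abs_le_iff)

lemma E1: "finite K \<Longrightarrow> k \<in> K \<Longrightarrow> (\<integral>x. x k \<partial>Pi\<^sub>M K (\<lambda>_::nat. unit_iv)) = 1/2"
  using PiU_integral_coord[of K k "\<lambda>t. t"] iv_int_id unit_iv_t by simp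

lemma E2: "finite K \<Longrightarrow> k \<in> K \<Longrightarrow> (\<integral>x. (x k)\<^sup>2 \<partial>Pi\<^sub>M K (\<lambda>_::nat. unit_iv)) = 1/3"
  using PiU_integral_coord[of K k "\<lambda>t. t\<^sup>2"] iv_int_sq unit_iv_t2 by simp

lemma E3: "finite K \<Longrightarrow> k \<in> K \<Longrightarrow> l \<in> K \<Longrightarrow> k \<noteq> l \<Longrightarrow> (\<integral>x. x k * x l \<partial>Pi\<^sub>M K (\<lambda>_::nat. unit_iv)) = 1/4"
  using PiU_integral_coord2[of K k l "\<lambda>t. t" "\<lambda>t. t"] iv_int_id unit_iv_t by simp



lemma const_var0:
  fixes \<phi> :: "(nat \<Rightarrow> real) \<Rightarrow> real"
  assumes m: "\<phi> \<in> borel_measurable (cube n)" and ae: "AE x in cube n. \<phi> x = c"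
  shows "Var n \<phi> = 0"
proof -
  interpret C: prob_space "cube n" by (rule prob_cube)
  have "(\<integral>x. (\<phi> x)\<^sup>2 \<partial>cube n) = (\<integral>x. c\<^sup>2 \<partial>cube n)"
    by (rule integral_cong_AE) (use m ae in auto)
  moreover have "mean0 n \<phi> = (\<integral>x. c \<partial>cube n)"
    unfolding mean0_def by (rule integral_cong_AE) (use m ae in auto)
  ultimately show ?thesis by (simp add: Var_def C.prob_space)
qed

lemma part2:
  fixes n i :: nat and c :: real
  assumes ni: "i \<in> {1..n}" and n2: "2 \<le> n" and c2: "c < 2"
  shows "\<exists>f h. admissible n f \<and> admissible n h \<and> Cov n f h \<ge> 0 \<and>
            sobol_total n i (\<lambda>x. f x + h x) > c * max (sobol_total n i f) (sobol_total n i h)"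
proof -
  define j where "j = (if i = 1 then 2 else (1::nat))"
  have j: "j \<in> {1..n}" "j \<noteq> i" using ni n2 by (auto simp: j_def)
  define K where "K = {1..n::nat}"
  have K: "finite K" "i \<in> K" "j \<in> K" "j \<in> K - {i}" "finite (K - {i})" using ni j by (auto simp: K_def)
  have cK: "cube n = Pi\<^sub>M K (\<lambda>_. unit_iv)" by (simp add: cube_def K_def)
  have wK: "cube_wo n i = Pi\<^sub>M (K - {i}) (\<lambda>_. unit_iv)" by (simp add: cube_wo_def K_def)
  interpret U: prob_space unit_iv by (rule prob_unit_iv)
  interpret C: prob_space "cube n" by (rule prob_cube)
  interpret W: prob_space "cube_wo n i" by (rule prob_cube_wo)
  note ci1 = int_x1[OF K(2), folded cK] int_x1[OF K(3), folded cK]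
  note ci2 = int_x2[OF K(2), folded cK] int_x2[OF K(3), folded cK]
  note ci11 = int_x11[OF K(2) K(3), folded cK]
  note ce1 = E1[OF K(1) K(2), folded cK] E1[OF K(1) K(3), folded cK]
  note ce2 = E2[OF K(1) K(2), folded cK] E2[OF K(1) K(3), folded cK]
  note ce3 = E3[OF K(1) K(2) K(3) j(2)[symmetric], folded cK]
  note wi1 = int_x1[OF K(4), folded wK]
  note wi2 = int_x2[OF K(4), folded wK]
  note we1 = E1[OF K(5) K(4), folded wK]
  note we2 = E2[OF K(5) K(4), folded wK]
  have mi: "(\<lambda>x. x i) \<in> borel_measurable (cube n)" using PiU_meas_coord[OF K(2)] cK by simp
  have mj: "(\<lambda>x. x j) \<in> borel_measurable (cube n)" using PiU_meas_coord[OF K(3)] cK by simp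
  define f where "f = (\<lambda>x::nat\<Rightarrow>real. x i + x j)"
  define h where "h = (\<lambda>x::nat\<Rightarrow>real. x i - x j)"
  have geq: "(\<lambda>x. f x + h x) = (\<lambda>x. 2 * x i)" by (auto simp: f_def h_def)
  have f2: "(\<lambda>x. (f x)\<^sup>2) = (\<lambda>x. (x i)\<^sup>2 + 2 * (x i * x j) + (x j)\<^sup>2)"
    by (auto simp: f_def power2_sum)
  have h2: "(\<lambda>x. (h x)\<^sup>2) = (\<lambda>x. (x i)\<^sup>2 - 2 * (x i * x j) + (x j)\<^sup>2)"
    by (auto simp: h_def power2_diff)
  have g2: "(\<lambda>x::nat\<Rightarrow>real. (2 * x i)\<^sup>2) = (\<lambda>x. 4 * (x i)\<^sup>2)"
    by (auto simp: power_mult_distrib)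
  have fh: "(\<lambda>x. f x * h x) = (\<lambda>x. (x i)\<^sup>2 - (x j)\<^sup>2)"
    by (auto simp: f_def h_def power2_eq_square algebra_simps)
  have f2i: "integrable (cube n) (\<lambda>x. (f x)\<^sup>2)" unfolding f2 using ci1 ci2 ci11 by simp
  have h2i: "integrable (cube n) (\<lambda>x. (h x)\<^sup>2)" unfolding h2 using ci1 ci2 ci11 by simp
  have f2v: "(\<integral>x. (f x)\<^sup>2 \<partial>cube n) = 7/6" unfolding f2 using ci1 ci2 ci11 ce1 ce2 ce3 by simp
  have h2v: "(\<integral>x. (h x)\<^sup>2 \<partial>cube n) = 1/6" unfolding h2 using ci1 ci2 ci11 ce1 ce2 ce3 by simp
  have g2v: "(\<integral>x. (2 * x i)\<^sup>2 \<partial>cube n) = 4/3" unfolding g2 using ci2 ce2 by simp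
  have mf: "mean0 n f = 1" unfolding mean0_def f_def using ci1 ce1 by simp
  have mh: "mean0 n h = 0" unfolding mean0_def h_def using ci1 ce1 by simp
  have mg: "mean0 n (\<lambda>x. 2 * x i) = 1" unfolding mean0_def using ci1 ce1 by simp
  have fhv: "(\<integral>x. f x * h x \<partial>cube n) = 0" unfolding fh using ci2 ce2 by simp
  have Vf: "Var n f = 1/6" unfolding Var_def using f2v mf by simp
  have Vh: "Var n h = 1/6" unfolding Var_def using h2v mh by simp
  have Vg: "Var n (\<lambda>x. 2 * x i) = 1/3" unfolding Var_def using g2v mg by simp
  have Cv: "Cov n f h = 0" unfolding Cov_def using fhv mf mh by simp
  have fm: "f \<in> borel_measurable (cube n)" unfolding f_def using mi mj by simp
  have hm: "h \<in> borel_measurable (cube n)" unfolding h_def using mi mj by simp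
  have af: "admissible n f"
    unfolding admissible_def using fm f2i const_var0[OF fm] Vf by auto
  have ah: "admissible n h"
    unfolding admissible_def using hm h2i const_var0[OF hm] Vh by auto
  have upd: "(y(i := t)) i = t" "(y(i := t)) j = y j" for y :: "nat \<Rightarrow> real" and t using j by auto
  have msf: "msec i f y = 1/2 + y j" for y
    unfolding msec_def f_def upd using iv_int_id unit_iv_t by (simp add: U.prob_space)
  have msh: "msec i h y = 1/2 - y j" for y
    unfolding msec_def h_def upd using iv_int_id unit_iv_t by (simp add: U.prob_space)
  have msg: "msec i (\<lambda>x. 2 * x i) y = 1" for y
    unfolding msec_def upd using iv_int_id unit_iv_t by (simp add: U.prob_space)
  have sf: "(\<lambda>y. (msec i f y)\<^sup>2) = (\<lambda>y. 1/4 + y j + (y j)\<^sup>2)"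
    by (rule ext) (simp add: msf power2_eq_square algebra_simps)
  have sh: "(\<lambda>y. (msec i h y)\<^sup>2) = (\<lambda>y. 1/4 - y j + (y j)\<^sup>2)"
    by (rule ext) (simp add: msh power2_eq_square algebra_simps)
  have Df: "Dn n i f = 1/12"
    unfolding Dn_def f2v sf using wi1 wi2 we1 we2 by (simp add: W.prob_space)
  have Dh: "Dn n i h = 1/12"
    unfolding Dn_def h2v sh using wi1 wi2 we1 we2 by (simp add: W.prob_space)
  have Dg: "Dn n i (\<lambda>x. 2 * x i) = 1/3"
    unfolding Dn_def g2v msg by (simp add: W.prob_space)
  have Sf: "sobol_total n i f = 1/2" by (simp add: sobol_Dn Df Vf)
  have Sh: "sobol_total n i h = 1/2" by (simp add: sobol_Dn Dh Vh)
  have Sg: "sobol_total n i (\<lambda>x. f x + h x) = 1" unfolding geq by (simp add: sobol_Dn Dg Vg)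
  have "c * max (sobol_total n i f) (sobol_total n i h) < sobol_total n i (\<lambda>x. f x + h x)"
    unfolding Sf Sh Sg using c2 by simp
  then show ?thesis using af ah Cv by (metis order_refl)
qed


theorem theoremB2:
  fixes n i :: nat
  assumes "1 \<le> n" and "i \<in> {1..n}"
  shows "(\<forall>f h. admissible n f \<and> admissible n h \<and> Cov n f h \<ge> 0 \<longrightarrow>
            sobol_total n i (\<lambda>x. f x + h x)
              \<le> (sqrt (sobol_total n i f * Var n f) + sqrt (sobol_total n i h * Var n h))\<^sup>2
                 / (Var n f + Var n h)
          \<and> sobol_total n i (\<lambda>x. f x + h x)
              \<le> 2 * max (sobol_total n i f) (sobol_total n i h))
       \<and> (2 \<le> n \<longrightarrow> (\<forall>c<2. \<exists>f h. admissible n f \<and> admissible n h \<and> Cov n f h \<ge> 0 \<and>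
            sobol_total n i (\<lambda>x. f x + h x) > c * max (sobol_total n i f) (sobol_total n i h)))"
    using part1[OF assms(2)] part2[OF assms(2)] by blast

end
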